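(* Let \[G=\langle a,b,c,s,t\mid sas^{-1}=ab,\ sbs^{-1}=b,\ scs^{-1}=c,\ tat^{-1}=ba,\ tbt^{-1}=b,\ tct^{-1}=c\rangle.\] Then the following subsets are equationally definable in $G$: (1) $\langle b\rangle$; (2) $\langle s\rangle$; (3) $\langle t\rangle$; (4) $\{(s^i,t^i)\mid i\in\mathbb{Z}\}\subseteq G^2$; (5) $\langle s,t\rangle$.
   Context: An equation over a finitely generated group $G$ with variables from a finite set $\mathcal X$ is an element $w\in G*F(\mathcal X)$, written $w=1$; a solution is a homomorphism $\phi:G*F(\mathcal X)\to G$ that is the identity on $G$ with $\phi(w)=1$; a system of equations is a finite set of equations in the same variables, solved by a common solution. A set $D\subseteq G^n$ is equationally definable if there is a system of equations $\mathcal E$ over $G$ and variables $X_1,\dots,X_n$ of $\mathcal E$ (not necessarily all variables) such that $D=\{(\phi(X_1),\dots,\phi(X_n)) \mid \phi \text{ a solution of } \mathcal E\}$. *)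

theory Defs
  imports "HOL-Algebra.Algebra"
begin

text \<open>A word over generators of type 'a: letters (x, False) stand for x,
  letters (x, True) stand for x inverse.\<close>
type_synonym 'a word = "('a \<times> bool) list"

inductive pres_eqv :: "('a word \<times> 'a word) set \<Rightarrow> 'a word \<Rightarrow> 'a word \<Rightarrow> bool"
  for R :: "('a word \<times> 'a word) set" where
  refl: "pres_eqv R w w"
| sym: "pres_eqv R u v \<Longrightarrow> pres_eqv R v u"
| trans: "pres_eqv R u v \<Longrightarrow> pres_eqv R v w \<Longrightarrow> pres_eqv R u w"
| cong: "pres_eqv R u v \<Longrightarrow> pres_eqv R (p @ u @ q) (p @ v @ q)"
| cancel: "pres_eqv R [(x, e), (x, \<not> e)] []"
| rel: "(u, v) \<in> R \<Longrightarrow> pres_eqv R u v"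

definition pres_class :: "('a word \<times> 'a word) set \<Rightarrow> 'a word \<Rightarrow> 'a word set" where
  "pres_class R w = {v. pres_eqv R w v}"

definition presented_group :: "('a word \<times> 'a word) set \<Rightarrow> 'a word set monoid" where
  "presented_group R =
     \<lparr>partial_object.carrier = range (pres_class R),
      monoid.mult = (\<lambda>P Q. pres_class R ((SOME u. u \<in> P) @ (SOME v. v \<in> Q))),
      monoid.one = pres_class R []\<rparr>"

text \<open>An equation over G with variables (of type nat) is an element of G * F(X),
  represented by a word whose letters are either constants from G (Inl g) or
  variables / inverse variables (Inr (x, False)) / (Inr (x, True)).\<close>
type_synonym 'g equation = "('g + nat \<times> bool) list"

fun eq_eval :: "('g, 'b) monoid_scheme \<Rightarrow> (nat \<Rightarrow> 'g) \<Rightarrow> 'g equation \<Rightarrow> 'g" where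
  "eq_eval G \<sigma> [] = \<one>\<^bsub>G\<^esub>"
| "eq_eval G \<sigma> (Inl g # w) = g \<otimes>\<^bsub>G\<^esub> eq_eval G \<sigma> w"
| "eq_eval G \<sigma> (Inr (x, False) # w) = \<sigma> x \<otimes>\<^bsub>G\<^esub> eq_eval G \<sigma> w"
| "eq_eval G \<sigma> (Inr (x, True) # w) = inv\<^bsub>G\<^esub> (\<sigma> x) \<otimes>\<^bsub>G\<^esub> eq_eval G \<sigma> w"

definition is_equation :: "('g, 'b) monoid_scheme \<Rightarrow> 'g equation \<Rightarrow> bool" where
  "is_equation G w \<longleftrightarrow> (\<forall>g. Inl g \<in> set w \<longrightarrow> g \<in> carrier G)"

definition solves :: "('g, 'b) monoid_scheme \<Rightarrow> 'g equation set \<Rightarrow> (nat \<Rightarrow> 'g) \<Rightarrow> bool" where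
  "solves G E \<sigma> \<longleftrightarrow> (\<forall>x. \<sigma> x \<in> carrier G) \<and> (\<forall>w\<in>E. eq_eval G \<sigma> w = \<one>\<^bsub>G\<^esub>)"

text \<open>D \<subseteq> G^n (tuples as lists of length n) is equationally definable.\<close>
definition eq_definable :: "('g, 'b) monoid_scheme \<Rightarrow> nat \<Rightarrow> 'g list set \<Rightarrow> bool" where
  "eq_definable G n D \<longleftrightarrow>
     (\<exists>E xs. finite E \<and> (\<forall>w\<in>E. is_equation G w) \<and> length xs = n \<and>
        D = {map \<sigma> xs | \<sigma>. solves G E \<sigma>})"

datatype gen = ga | gb | gc | gs | gt

abbreviation (input) gl :: "gen \<Rightarrow> gen word" where "gl x \<equiv> [(x, False)]"
abbreviation (input) gli :: "gen \<Rightarrow> gen word" where "gli x \<equiv> [(x, True)]"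

definition rels6 :: "(gen word \<times> gen word) set" where
  "rels6 = {
     (gl gs @ gl ga @ gli gs, gl ga @ gl gb),
     (gl gs @ gl gb @ gli gs, gl gb),
     (gl gs @ gl gc @ gli gs, gl gc),
     (gl gt @ gl ga @ gli gt, gl gb @ gl ga),
     (gl gt @ gl gb @ gli gt, gl gb),
     (gl gt @ gl gc @ gli gt, gl gc)}"

definition G6 :: "gen word set monoid" where
  "G6 = presented_group rels6"

definition gen6 :: "gen \<Rightarrow> gen word set" where
  "gen6 x = pres_class rels6 [(x, False)]"

end

theory Submission
  imports Defs
begin

definition linv :: "'a \<times> bool \<Rightarrow> 'a \<times> bool" where "linv l = (fst l, \<not> snd l)"
definition invw :: "('a \<times> bool) list \<Rightarrow> ('a \<times> bool) list" where "invw w = rev (map linv w)"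

lemma linv_linv[simp]: "linv (linv x) = x" by (simp add: linv_def)
lemma linv_neq[simp]: "linv x \<noteq> x" "x \<noteq> linv x" by (auto simp: linv_def prod_eq_iff)
lemma invw_invw[simp]: "invw (invw w) = w" by (simp add: invw_def rev_map comp_def)
lemma invw_simps[simp]: "invw [] = []" "invw (x # w) = invw w @ [linv x]" "invw (u @ v) = invw v @ invw u"
  by (auto simp: invw_def)

lemma pe_app: "pres_eqv R u u' \<Longrightarrow> pres_eqv R v v' \<Longrightarrow> pres_eqv R (u@v) (u'@v')"
proof -
  assume a: "pres_eqv R u u'" "pres_eqv R v v'"
  have 1: "pres_eqv R (u @ v) (u' @ v)" using pres_eqv.cong[OF a(1), of "[]" v] by simp
  have 2: "pres_eqv R (u' @ v) (u' @ v')" using pres_eqv.cong[OF a(2), of u' "[]"] by simp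
  show ?thesis using pres_eqv.trans[OF 1 2] .
qed

lemma pe_cancel: "pres_eqv R [x, linv x] []"
  using pres_eqv.cancel[of R "fst x" "snd x"] by (simp add: linv_def)
lemma pe_cancel': "pres_eqv R [linv x, x] []"
  using pe_cancel[of R "linv x"] by simp

lemma pe_winv: "pres_eqv R (w @ invw w) []"
proof (induction w)
  case Nil then show ?case by (simp add: pres_eqv.refl)
next
  case (Cons x w)
  have "pres_eqv R ([x] @ (w @ invw w) @ [linv x]) ([x] @ [] @ [linv x])"
    by (rule pres_eqv.cong[OF Cons.IH])
  then have "pres_eqv R ((x # w) @ invw (x # w)) [x, linv x]" by simp
  then show ?case using pe_cancel[of R x] by (rule pres_eqv.trans)
qed

lemma pe_invw_w: "pres_eqv R (invw w @ w) []"
  using pe_winv[of R "invw w"] by simp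

lemma pe_inv: assumes "pres_eqv R u v" shows "pres_eqv R (invw u) (invw v)"
proof -
  have "pres_eqv R (invw u @ (v @ invw v)) (invw u @ (u @ invw v))"
    using pe_app[OF pres_eqv.refl pe_app[OF pres_eqv.sym[OF assms] pres_eqv.refl]] .
  moreover have "pres_eqv R (invw u @ (v @ invw v)) (invw u @ [])"
    using pe_app[OF pres_eqv.refl pe_winv] .
  moreover have "pres_eqv R ((invw u @ u) @ invw v) ([] @ invw v)"
    using pe_app[OF pe_invw_w pres_eqv.refl] .
  ultimately show ?thesis by (metis append_assoc append_Nil append_Nil2 pres_eqv.trans pres_eqv.sym)
qed

lemma cl_eq: "pres_class R u = pres_class R v \<longleftrightarrow> pres_eqv R u v"
proof
  assume "pres_class R u = pres_class R v"
  then have "v \<in> pres_class R u" by (auto simp: pres_class_def intro: pres_eqv.refl)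
  then show "pres_eqv R u v" by (simp add: pres_class_def)
next
  assume "pres_eqv R u v"
  then show "pres_class R u = pres_class R v"
    unfolding pres_class_def using pres_eqv.trans pres_eqv.sym by blast
qed

lemma cl_some: "pres_class R (SOME x. x \<in> pres_class R u) = pres_class R u"
proof -
  have "u \<in> pres_class R u" by (simp add: pres_class_def pres_eqv.refl)
  then have "(SOME x. x \<in> pres_class R u) \<in> pres_class R u" by (rule someI)
  then show ?thesis unfolding cl_eq by (simp add: pres_class_def pres_eqv.sym)
qed

lemma pg_carrier: "carrier (presented_group R) = range (pres_class R)"
  by (simp add: presented_group_def)
lemma pg_one: "one (presented_group R) = pres_class R []"
  by (simp add: presented_group_def)
lemma pg_mult: "pres_class R u \<otimes>\<^bsub>presented_group R\<^esub> pres_class R v = pres_class R (u @ v)"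
proof -
  let ?u = "SOME x. x \<in> pres_class R u" and ?v = "SOME x. x \<in> pres_class R v"
  have "pres_eqv R ?u u" "pres_eqv R ?v v" using cl_some[of R u] cl_some[of R v] cl_eq by metis+
  then have "pres_eqv R (?u @ ?v) (u @ v)" by (rule pe_app)
  then show ?thesis by (simp add: presented_group_def cl_eq)
qed

lemma pg_group: "group (presented_group R)"
proof (rule groupI)
  fix x y z assume "x \<in> carrier (presented_group R)" "y \<in> carrier (presented_group R)"
    "z \<in> carrier (presented_group R)"
  then obtain u v w where "x = pres_class R u" "y = pres_class R v" "z = pres_class R w"
    by (auto simp: pg_carrier)
  then show "x \<otimes>\<^bsub>presented_group R\<^esub> y \<otimes>\<^bsub>presented_group R\<^esub> z =
      x \<otimes>\<^bsub>presented_group R\<^esub> (y \<otimes>\<^bsub>presented_group R\<^esub> z)"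
    by (simp add: pg_mult)
next
  fix x y assume "x \<in> carrier (presented_group R)" "y \<in> carrier (presented_group R)"
  then obtain u v where "x = pres_class R u" "y = pres_class R v" by (auto simp: pg_carrier)
  then show "x \<otimes>\<^bsub>presented_group R\<^esub> y \<in> carrier (presented_group R)"
    by (simp add: pg_mult pg_carrier)
next
  show "\<one>\<^bsub>presented_group R\<^esub> \<in> carrier (presented_group R)" by (simp add: pg_one pg_carrier)
next
  fix x assume "x \<in> carrier (presented_group R)"
  then obtain u where "x = pres_class R u" by (auto simp: pg_carrier)
  then show "\<one>\<^bsub>presented_group R\<^esub> \<otimes>\<^bsub>presented_group R\<^esub> x = x"
    by (simp add: pg_mult pg_one)
next
  fix x assume "x \<in> carrier (presented_group R)"
  then obtain u where x: "x = pres_class R u" by (auto simp: pg_carrier)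
  show "\<exists>y\<in>carrier (presented_group R). y \<otimes>\<^bsub>presented_group R\<^esub> x = \<one>\<^bsub>presented_group R\<^esub>"
    by (rule bexI[of _ "pres_class R (invw u)"])
       (auto simp: x pg_mult pg_one cl_eq pe_invw_w pg_carrier)
qed

lemma pg_inv: "inv\<^bsub>presented_group R\<^esub> (pres_class R u) = pres_class R (invw u)"
  by (rule group.inv_equality[OF pg_group]) (auto simp: pg_mult pg_one cl_eq pe_invw_w pg_carrier)

type_synonym letter = "gen \<times> bool"

definition cr :: "letter \<Rightarrow> letter list \<Rightarrow> letter list" where
  "cr x v = (if v \<noteq> [] \<and> hd v = linv x then tl v else x # v)"

fun reduced :: "letter list \<Rightarrow> bool" where
  "reduced [] = True"
| "reduced [x] = True"
| "reduced (x # y # v) = (y \<noteq> linv x \<and> reduced (y # v))"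

definition lmul :: "letter list \<Rightarrow> letter list \<Rightarrow> letter list" where
  "lmul w v = foldr cr w v"

lemma linv_eq_iff: "linv a = b \<longleftrightarrow> a = linv b" by auto

lemma reduced_Cons: "reduced (x # v) \<longleftrightarrow> reduced v \<and> (v = [] \<or> hd v \<noteq> linv x)"
  by (cases v) auto

lemma lmul_Nil[simp]: "lmul [] v = v" by (simp add: lmul_def)
lemma lmul_Cons[simp]: "lmul (x # w) v = cr x (lmul w v)" by (simp add: lmul_def)
lemma lmul_append: "lmul (w1 @ w2) v = lmul w1 (lmul w2 v)" by (simp add: lmul_def)

lemma reduced_cr: "reduced v \<Longrightarrow> reduced (cr x v)"
  by (cases v) (auto simp: cr_def reduced_Cons)

lemma reduced_lmul: "reduced v \<Longrightarrow> reduced (lmul w v)"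
  by (induction w) (auto simp: reduced_cr)

lemma cr_cancel: "reduced v \<Longrightarrow> cr x (cr (linv x) v) = v"
  by (cases v) (auto simp: cr_def reduced_Cons)

lemma cr_cancel2: "reduced v \<Longrightarrow> cr (a, e) (cr (a, \<not> e) v) = v"
  using cr_cancel[of v "(a,e)"] by (simp add: linv_def)
lemma cr_cancel3: "reduced v \<Longrightarrow> cr (a, \<not> e) (cr (a, e) v) = v"
  using cr_cancel[of v "(a,\<not> e)"] by (simp add: linv_def)

lemma reduced_Nil[simp]: "reduced []" by simp

lemma lmul_cr: "reduced r \<Longrightarrow> lmul (cr l u) r = cr l (lmul u r)"
proof (cases "u \<noteq> [] \<and> hd u = linv l")
  case True
  assume r: "reduced r"
  then obtain u' where u: "u = linv l # u'" using True by (cases u) auto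
  have "cr l (lmul u r) = cr l (cr (linv l) (lmul u' r))" by (simp add: u)
  also have "\<dots> = lmul u' r" using cr_cancel[OF reduced_lmul[OF r]] by simp
  finally show ?thesis by (simp add: u cr_def)
next
  case False then have "cr l u = l # u" by (auto simp: cr_def)
  then show ?thesis by simp
qed

lemma lmul_inv: "reduced v \<Longrightarrow> lmul (invw w) (lmul w v) = v"
proof (induction w arbitrary: v)
  case Nil then show ?case by simp
next
  case (Cons x w)
  have "lmul (invw (x # w)) (lmul (x # w) v) = lmul (invw w) (cr (linv x) (cr x (lmul w v)))"
    by (simp add: lmul_append)
  also have "\<dots> = lmul (invw w) (lmul w v)"
    using cr_cancel[OF reduced_lmul[OF Cons.prems], of "linv x" w] by simp
  finally show ?case using Cons by simp
qed

lemma lmul_inv2: "reduced v \<Longrightarrow> lmul w (lmul (invw w) v) = v"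
  using lmul_inv[of v "invw w"] by simp

lemma cr_noncancel: "reduced (x # v) \<Longrightarrow> cr x v = x # v"
  by (auto simp: cr_def reduced_Cons)

lemma lmul_red_app: "reduced (w @ v) \<Longrightarrow> lmul w v = w @ v"
proof (induction w)
  case Nil then show ?case by simp
next
  case (Cons x w)
  then have "reduced (w @ v)" by (simp add: reduced_Cons)
  then show ?case using Cons by (simp add: cr_noncancel)
qed

lemma lmul_red: "reduced w \<Longrightarrow> lmul w [] = w"
  using lmul_red_app[of w "[]"] by simp

lemma lmul_lmul: "reduced v \<Longrightarrow> reduced s \<Longrightarrow> lmul (lmul w v) s = lmul w (lmul v s)"
  by (induction w) (auto simp: lmul_cr reduced_lmul)

lemma lmul_lmul_nil: "reduced s \<Longrightarrow> lmul (lmul w []) s = lmul w s"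
  using lmul_lmul[of "[]" s w] by simp

section \<open>The automorphisms\<close>

definition img :: "letter \<Rightarrow> letter \<Rightarrow> letter list" where
  "img l x = (if (fst l = gs \<or> fst l = gt) \<and> fst x = ga then
     (if fst l = gs then (if snd x then [(gb, \<not> snd l), (ga,True)] else [(ga,False),(gb, snd l)])
      else (if snd x then [(ga,True),(gb, \<not> snd l)] else [(gb, snd l),(ga,False)]))
   else [x])"

definition phi :: "letter \<Rightarrow> letter list \<Rightarrow> letter list" where
  "phi l u = lmul (concat (map (img l) u)) []"

lemma img_linv: "img l (linv x) = invw (img l x)"
  by (cases l; cases x) (auto simp: img_def linv_def)

lemma reduced_phi: "reduced (phi l u)"
  by (simp add: phi_def reduced_lmul)

lemma phi_Nil[simp]: "phi l [] = []" by (simp add: phi_def)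

lemma phi_cr: "phi l (cr x v) = lmul (img l x) (phi l v)"
proof (cases "v \<noteq> [] \<and> hd v = linv x")
  case True
  then obtain v' where v: "v = linv x # v'" by (cases v) auto
  have "phi l v = lmul (invw (img l x)) (phi l v')"
    by (simp add: v phi_def lmul_append img_linv)
  then have "lmul (img l x) (phi l v) = phi l v'" using lmul_inv2[OF reduced_phi] by simp
  then show ?thesis by (simp add: cr_def v)
next
  case False then have "cr x v = x # v" by (auto simp: cr_def)
  then show ?thesis by (simp add: phi_def lmul_append)
qed

lemma phi_lmul: "phi l (lmul w v) = lmul (concat (map (img l) w)) (phi l v)"
  by (induction w) (auto simp: phi_cr lmul_append)

lemma img_inv_img: "reduced r \<Longrightarrow> lmul (concat (map (img l) (img (linv l) x))) r = cr x r"
  apply (cases l; cases x)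
  apply (auto simp: img_def linv_def cr_cancel2 cr_cancel3 reduced_cr)
  done

lemma lmul_concat_map:
  assumes "\<And>x r. reduced r \<Longrightarrow> lmul (f x) r = cr x r" "reduced r"
  shows "lmul (concat (map f u)) r = lmul u r"
  using assms(2) by (induction u) (auto simp: lmul_append assms(1) reduced_lmul)

lemma concat_map_concat: "concat (map f (concat (map g u))) = concat (map (\<lambda>x. concat (map f (g x))) u)"
  by (induction u) auto

lemma phi_phi_inv: "reduced u \<Longrightarrow> phi l (phi (linv l) u) = u"
proof -
  assume u: "reduced u"
  have "phi l (phi (linv l) u) = lmul (concat (map (img l) (concat (map (img (linv l)) u)))) []"
    unfolding phi_def[of "linv l"] by (simp add: phi_lmul)
  also have "\<dots> = lmul (concat (map (\<lambda>x. concat (map (img l) (img (linv l) x))) u)) []"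
    by (simp only: concat_map_concat)
  also have "\<dots> = lmul u []" by (rule lmul_concat_map) (auto simp: img_inv_img)
  finally show ?thesis using lmul_red[OF u] by simp
qed

definition abc :: "letter \<Rightarrow> bool" where "abc x \<longleftrightarrow> fst x = ga \<or> fst x = gb \<or> fst x = gc"

definition valid :: "letter list \<times> letter list \<Rightarrow> bool" where
  "valid m \<longleftrightarrow> reduced (fst m) \<and> reduced (snd m) \<and> (\<forall>x\<in>set (fst m). abc x) \<and> (\<forall>x\<in>set (snd m). \<not> abc x)"

definition act :: "letter \<Rightarrow> letter list \<times> letter list \<Rightarrow> letter list \<times> letter list" where
  "act l m = (if abc l then (cr l (fst m), snd m) else (phi l (fst m), cr l (snd m)))"

definition ev :: "letter list \<Rightarrow> letter list \<times> letter list" where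
  "ev w = foldr act w ([], [])"

lemma abc_linv[simp]: "abc (linv x) = abc x" by (simp add: abc_def linv_def)

lemma set_cr: "set (cr x v) \<subseteq> insert x (set v)"
  by (cases v) (auto simp: cr_def)

lemma set_lmul: "set (lmul w v) \<subseteq> set w \<union> set v"
  by (induction w) (use set_cr in fastforce)+

lemma set_img: "abc x \<Longrightarrow> y \<in> set (img l x) \<Longrightarrow> abc y"
  by (auto simp: img_def abc_def split: if_splits)

lemma set_phi: "(\<forall>x\<in>set u. abc x) \<Longrightarrow> y \<in> set (phi l u) \<Longrightarrow> abc y"
proof -
  assume a: "\<forall>x\<in>set u. abc x" "y \<in> set (phi l u)"
  then have "y \<in> set (concat (map (img l) u))"
    unfolding phi_def using set_lmul[of "concat (map (img l) u)" "[]"] by auto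
  then obtain x where "x \<in> set u" "y \<in> set (img l x)" by auto
  then show "abc y" using a(1) set_img by blast
qed

lemma valid_act: "valid m \<Longrightarrow> valid (act l m)"
proof -
  assume v: "valid m"
  show ?thesis
  proof (cases "abc l")
    case True
    then show ?thesis using v set_cr[of l "fst m"] unfolding valid_def act_def
      by (auto simp: reduced_cr)
  next
    case False
    then show ?thesis using v set_cr[of l "snd m"] set_phi[of "fst m" _ l] unfolding valid_def act_def
      by (auto simp: reduced_cr reduced_phi)
  qed
qed

lemma valid_foldr: "valid m \<Longrightarrow> valid (foldr act w m)"
  by (induction w) (auto simp: valid_act)

lemma valid_nil[simp]: "valid ([], [])" by (simp add: valid_def)

lemma valid_ev: "valid (ev w)" by (simp add: ev_def valid_foldr)

lemma act_cancel: "valid m \<Longrightarrow> act l (act (linv l) m) = m"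
  by (cases m) (auto simp: act_def valid_def cr_cancel phi_phi_inv[of _ l, simplified] reduced_cr
      phi_phi_inv[of _ "linv l", simplified])

lemma foldr_act_abc: "(\<forall>y\<in>set w. abc y) \<Longrightarrow> foldr act w (u, g) = (lmul w u, g)"
  by (induction w) (auto simp: act_def)

lemma img_abc: "abc x \<Longrightarrow> \<forall>y\<in>set (img l x). abc y"
  using set_img by blast

lemma act_rel: assumes "\<not> abc l" "abc x" "valid m"
  shows "foldr act [l, x, linv l] m = foldr act (img l x) m"
proof -
  obtain u g where m: "m = (u, g)" by (cases m)
  have ru: "reduced u" "reduced g" using assms(3) by (auto simp: m valid_def)
  have "foldr act [l, x, linv l] m = (phi l (cr x (phi (linv l) u)), cr l (cr (linv l) g))"
    using assms by (simp add: m act_def)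
  also have "\<dots> = (lmul (img l x) u, g)"
    using ru by (simp add: phi_cr phi_phi_inv cr_cancel)
  also have "\<dots> = foldr act (img l x) m"
    using foldr_act_abc[OF img_abc[OF assms(2)]] by (simp add: m)
  finally show ?thesis .
qed

lemma foldr_act_append: "foldr act (u @ v) m = foldr act u (foldr act v m)" by simp

lemma ev_respects: "pres_eqv rels6 u v \<Longrightarrow> valid m \<Longrightarrow> foldr act u m = foldr act v m"
proof (induction arbitrary: m rule: pres_eqv.induct)
  case (refl w) then show ?case by simp
next
  case (sym u v) then show ?case by simp
next
  case (trans u v w) then show ?case by simp
next
  case (cong u v p q)
  then show ?case by (simp add: valid_foldr)
next
  case (cancel x e)
  then show ?case using act_cancel[of m "(x, e)"] by (simp add: linv_def)
next
  case (rel u v)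
  have s: "\<not> abc (gs, False)" "\<not> abc (gt, False)" by (auto simp: abc_def)
  have a: "abc (ga, False)" "abc (gb, False)" "abc (gc, False)" by (auto simp: abc_def)
  have l: "linv (gs, False) = (gs, True)" "linv (gt, False) = (gt, True)" by (auto simp: linv_def)
  from rel show ?case unfolding rels6_def
    using act_rel[OF s(1) a(1) rel(2)] act_rel[OF s(1) a(2) rel(2)] act_rel[OF s(1) a(3) rel(2)]
      act_rel[OF s(2) a(1) rel(2)] act_rel[OF s(2) a(2) rel(2)] act_rel[OF s(2) a(3) rel(2)]
    by (auto simp: l img_def)
qed

lemma ev_eq: "pres_eqv rels6 u v \<Longrightarrow> ev u = ev v"
  unfolding ev_def by (rule ev_respects) simp_all

section \<open>Normal forms are reached\<close>

lemma pe_cr: "pres_eqv R (x # v) (cr x v)"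
proof (cases "v \<noteq> [] \<and> hd v = linv x")
  case True
  then obtain v' where v: "v = linv x # v'" by (cases v) auto
  show ?thesis using pres_eqv.cong[OF pe_cancel[of R x], of "[]" v'] by (simp add: v cr_def)
next
  case False then show ?thesis by (auto simp: cr_def intro: pres_eqv.refl)
qed

lemma pe_lmul: "pres_eqv R (w @ v) (lmul w v)"
proof (induction w)
  case Nil then show ?case by (simp add: pres_eqv.refl)
next
  case (Cons x w)
  have "pres_eqv R ([x] @ (w @ v) @ []) ([x] @ lmul w v @ [])" by (rule pres_eqv.cong[OF Cons.IH])
  then have "pres_eqv R (x # w @ v) (x # lmul w v)" by simp
  then show ?case using pres_eqv.trans[OF _ pe_cr[of R x "lmul w v"]] by simp
qed

lemma L1: assumes "pres_eqv R ([l] @ w @ [linv l]) w'" shows "pres_eqv R ([l] @ w) (w' @ [l])"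
proof -
  have a: "pres_eqv R (([l] @ w) @ [linv l, l]) (([l] @ w) @ [])"
    using pe_app[OF pres_eqv.refl pe_cancel'] .
  have b: "pres_eqv R (([l] @ w @ [linv l]) @ [l]) (w' @ [l])"
    using pe_app[OF assms pres_eqv.refl] .
  have "pres_eqv R (l # w) (l # w @ [linv l, l])" using pres_eqv.sym[OF a] by simp
  moreover have "pres_eqv R (l # w @ [linv l, l]) (w' @ [l])" using b by simp
  ultimately have "pres_eqv R (l # w) (l # w @ [linv l, l])" "pres_eqv R (l # w @ [linv l, l]) (w' @ [l])"
    by simp_all
  then show ?thesis using pres_eqv.trans[of R "l # w" "l # w @ [linv l, l]" "w' @ [l]"] by simp
qed

lemma L2: assumes "pres_eqv R ([l] @ w) (w' @ [l])" shows "pres_eqv R ([linv l] @ w') (w @ [linv l])"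
proof -
  have 1: "pres_eqv R ([linv l] @ w' @ [l, linv l]) ([linv l] @ w' @ [])"
    using pe_app[OF pres_eqv.refl pe_app[OF pres_eqv.refl pe_cancel]] .
  have 2: "pres_eqv R ([linv l] @ (w' @ [l]) @ [linv l]) ([linv l] @ ([l] @ w) @ [linv l])"
    using pe_app[OF pres_eqv.refl pe_app[OF pres_eqv.sym[OF assms] pres_eqv.refl]] .
  have 3: "pres_eqv R ([linv l, l] @ w @ [linv l]) ([] @ w @ [linv l])"
    using pe_app[OF pe_cancel' pres_eqv.refl] .
  have a: "pres_eqv R (linv l # w') (linv l # w' @ [l, linv l])" using pres_eqv.sym[OF 1] by simp
  have b: "pres_eqv R (linv l # w' @ [l, linv l]) (linv l # l # w @ [linv l])" using 2 by simp
  have c: "pres_eqv R (linv l # l # w @ [linv l]) (w @ [linv l])" using 3 by simp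
  show ?thesis using pres_eqv.trans[OF pres_eqv.trans[OF a b] c] by simp
qed

lemma rel_letter:
  assumes "l = (gs, False) \<or> l = (gt, False)" "abc x"
  shows "pres_eqv rels6 [l, x, linv l] (img l x)"
proof -
  have pos: "pres_eqv rels6 [l, (y, False), linv l] (img l (y, False))" if "y = ga \<or> y = gb \<or> y = gc" for y
  proof (rule pres_eqv.rel)
    show "([l, (y, False), linv l], img l (y, False)) \<in> rels6"
      using assms(1) that by (elim disjE) (simp_all add: rels6_def img_def linv_def)
  qed
  obtain y e where x: "x = (y, e)" and y: "y = ga \<or> y = gb \<or> y = gc"
    using assms(2) by (cases x) (auto simp: abc_def)
  show ?thesis
  proof (cases e)
    case False then show ?thesis using pos[OF y] by (simp add: x)
  next
    case True
    have "pres_eqv rels6 (invw [l, (y, False), linv l]) (invw (img l (y, False)))"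
      by (rule pe_inv[OF pos[OF y]])
    then show ?thesis by (simp add: x True img_linv[symmetric] linv_def)
  qed
qed

lemma letter_comm_pos:
  assumes "l = (gs, False) \<or> l = (gt, False)" "abc x"
  shows "pres_eqv rels6 ([l] @ [x]) (img l x @ [l])"
  using L1[of rels6 l "[x]"] rel_letter[OF assms] by simp

lemma word_comm:
  assumes "\<And>x. abc x \<Longrightarrow> pres_eqv R ([l] @ [x]) (img l x @ [l])" "\<forall>x\<in>set u. abc x"
  shows "pres_eqv R ([l] @ u) (concat (map (img l) u) @ [l])"
  using assms(2)
proof (induction u)
  case Nil then show ?case by (simp add: pres_eqv.refl)
next
  case (Cons x u)
  have 1: "pres_eqv R (([l] @ [x]) @ u) ((img l x @ [l]) @ u)"
    using pe_app[OF assms(1) pres_eqv.refl] Cons.prems by simp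
  have 2: "pres_eqv R (img l x @ ([l] @ u)) (img l x @ (concat (map (img l) u) @ [l]))"
    using pe_app[OF pres_eqv.refl Cons.IH] Cons.prems by simp
  from 1 2 have "pres_eqv R (l # x # u) (img l x @ l # u)" "pres_eqv R (img l x @ l # u) (img l x @ (concat (map (img l) u) @ [l]))" by simp_all
  then show ?case using pres_eqv.trans[of R "l # x # u" "img l x @ l # u"] by simp
qed

lemma img_abc_all: "\<forall>x\<in>set u. abc x \<Longrightarrow> \<forall>y\<in>set (concat (map (img l) u)). abc y"
proof
  fix y assume a: "\<forall>x\<in>set u. abc x" "y \<in> set (concat (map (img l) u))"
  then obtain x where "x \<in> set u" "y \<in> set (img l x)" by auto
  then show "abc y" using a(1) set_img by blast
qed

lemma letter_comm:
  assumes "\<not> abc l" "abc x"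
  shows "pres_eqv rels6 ([l] @ [x]) (img l x @ [l])"
proof -
  obtain g e where l: "l = (g, e)" and g: "g = gs \<or> g = gt"
    using assms(1) by (cases l; cases "fst l") (auto simp: abc_def)
  show ?thesis
  proof (cases e)
    case False then show ?thesis using letter_comm_pos[OF _ assms(2)] g l by auto
  next
    case True
    let ?l = "(g, False)"
    have lp: "?l = (gs, False) \<or> ?l = (gt, False)" using g by auto
    have ia: "\<forall>y\<in>set (img (linv ?l) x). abc y" using img_abc[OF assms(2)] by blast
    have "pres_eqv rels6 ([?l] @ img (linv ?l) x) (concat (map (img ?l) (img (linv ?l) x)) @ [?l])"
      by (rule word_comm[OF letter_comm_pos[OF lp] ia])
    moreover have "pres_eqv rels6 (concat (map (img ?l) (img (linv ?l) x)) @ [?l])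
        (lmul (concat (map (img ?l) (img (linv ?l) x))) [] @ [?l])"
      using pe_app[OF pe_lmul[of rels6 _ "[]", simplified] pres_eqv.refl] .
    moreover have "lmul (concat (map (img ?l) (img (linv ?l) x))) [] = [x]"
      using img_inv_img[of "[]" ?l x] by (simp add: cr_def)
    ultimately have "pres_eqv rels6 ([?l] @ img (linv ?l) x) ([x] @ [?l])"
      by (metis (no_types) pres_eqv.trans)
    from L2[OF this] show ?thesis by (simp add: l True linv_def)
  qed
qed

lemma ev_sec: "pres_eqv rels6 w (fst (ev w) @ snd (ev w))"
proof (induction w)
  case Nil then show ?case by (simp add: ev_def pres_eqv.refl)
next
  case (Cons l w)
  obtain u g where e: "ev w = (u, g)" by (cases "ev w")
  have v: "valid (u, g)" using valid_ev[of w] by (simp add: e)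
  have 1: "pres_eqv rels6 ([l] @ w @ []) ([l] @ (u @ g) @ [])"
    using pres_eqv.cong[OF Cons.IH, of "[l]" "[]"] by (simp add: e)
  then have 1: "pres_eqv rels6 (l # w) (l # u @ g)" by simp
  have evc: "ev (l # w) = act l (u, g)" by (simp add: ev_def e[unfolded ev_def])
  show ?case
  proof (cases "abc l")
    case True
    have "pres_eqv rels6 ((l # u) @ g) (cr l u @ g)" using pe_app[OF pe_cr pres_eqv.refl] .
    then have "pres_eqv rels6 (l # w) (cr l u @ g)" using pres_eqv.trans[OF 1] by simp
    then show ?thesis using True by (simp add: evc act_def)
  next
    case False
    have u: "\<forall>x\<in>set u. abc x" using v by (simp add: valid_def)
    have 2: "pres_eqv rels6 ([l] @ u) (concat (map (img l) u) @ [l])"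
      by (rule word_comm[OF letter_comm[OF False] u])
    have 3: "pres_eqv rels6 (concat (map (img l) u) @ [l]) (phi l u @ [l])"
      unfolding phi_def using pe_app[OF pe_lmul[of rels6 _ "[]", simplified] pres_eqv.refl] .
    have 4: "pres_eqv rels6 (phi l u @ ([l] @ g)) (phi l u @ cr l g)"
      using pe_app[OF pres_eqv.refl pe_cr[of rels6 l g]] by simp
    have "pres_eqv rels6 (([l] @ u) @ g) ((phi l u @ [l]) @ g)"
      using pe_app[OF pres_eqv.trans[OF 2 3] pres_eqv.refl] .
    then have 5: "pres_eqv rels6 (l # u @ g) (phi l u @ ([l] @ g))" by simp
    have "pres_eqv rels6 (l # w) (phi l u @ cr l g)"
      using pres_eqv.trans[OF pres_eqv.trans[OF 1 5] 4] .
    then show ?thesis using False by (simp add: evc act_def)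
  qed
qed

theorem pe_iff_ev: "pres_eqv rels6 u v \<longleftrightarrow> ev u = ev v"
proof
  assume "pres_eqv rels6 u v" then show "ev u = ev v" by (rule ev_eq)
next
  assume "ev u = ev v"
  then show "pres_eqv rels6 u v"
    using pres_eqv.trans[OF ev_sec[of u]] pres_eqv.sym[OF ev_sec[of v]] by simp
qed

definition phiw :: "letter list \<Rightarrow> letter list \<Rightarrow> letter list" where "phiw g v = foldr phi g v"
definition mulM :: "letter list \<times> letter list \<Rightarrow> letter list \<times> letter list \<Rightarrow> letter list \<times> letter list" where
  "mulM m n = (lmul (fst m) (phiw (snd m) (fst n)), lmul (snd m) (snd n))"

lemma phiw_Nil[simp]: "phiw [] v = v" by (simp add: phiw_def)
lemma phiw_Cons[simp]: "phiw (l # g) v = phi l (phiw g v)" by (simp add: phiw_def)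
lemma reduced_phiw: "reduced v \<Longrightarrow> reduced (phiw g v)" by (cases g) (auto simp: reduced_phi)

lemma phiw_cr: assumes "reduced v" shows "phiw (cr l g) v = phi l (phiw g v)"
proof (cases "g \<noteq> [] \<and> hd g = linv l")
  case True
  then obtain g' where g: "g = linv l # g'" by (cases g) auto
  have "phi l (phi (linv l) (phiw g' v)) = phiw g' v"
    by (rule phi_phi_inv[OF reduced_phiw[OF assms]])
  then show ?thesis by (simp add: g cr_def)
next
  case False then have "cr l g = l # g" by (auto simp: cr_def)
  then show ?thesis by simp
qed

lemma act_mulM: assumes "valid m" "valid n" shows "act l (mulM m n) = mulM (act l m) n"
proof -
  obtain u g where m: "m = (u, g)" by (cases m)
  obtain v h where n: "n = (v, h)" by (cases n)
  have r: "reduced u" "reduced g" "reduced v" "reduced h" using assms by (auto simp: m n valid_def)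
  have rp: "reduced (phiw g v)" by (rule reduced_phiw[OF r(3)])
  show ?thesis
  proof (cases "abc l")
    case True
    then show ?thesis by (simp add: m n mulM_def act_def lmul_cr[OF rp])
  next
    case False
    have "phi l (lmul u (phiw g v)) = lmul (concat (map (img l) u)) (phi l (phiw g v))"
      by (rule phi_lmul)
    also have "\<dots> = lmul (phi l u) (phiw (cr l g) v)"
    proof -
      have "lmul (phi l u) (phi l (phiw g v)) = lmul (concat (map (img l) u)) (phi l (phiw g v))"
        unfolding phi_def[of l u] by (rule lmul_lmul_nil[OF reduced_phi])
      then show ?thesis by (simp add: phiw_cr[OF r(3)])
    qed
    finally show ?thesis using False by (simp add: m n mulM_def act_def lmul_cr[OF r(4)])
  qed
qed

lemma foldr_act_mulM: "valid m \<Longrightarrow> valid n \<Longrightarrow> foldr act w (mulM m n) = mulM (foldr act w m) n"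
  by (induction w) (auto simp: act_mulM valid_foldr)

lemma mulM_one: "mulM ([], []) n = n" by (simp add: mulM_def)

lemma ev_append: "ev (u @ v) = mulM (ev u) (ev v)"
proof -
  have "ev (u @ v) = foldr act u (mulM ([], []) (ev v))" by (simp add: ev_def mulM_one)
  also have "\<dots> = mulM (ev u) (ev v)" using foldr_act_mulM[OF valid_nil valid_ev, of u v] by (simp add: ev_def)
  finally show ?thesis .
qed

lemma ev_Cons: "ev (l # w) = act l (ev w)" by (simp add: ev_def)
lemma ev_Nil[simp]: "ev [] = ([], [])" by (simp add: ev_def)

abbreviation cl :: "letter list \<Rightarrow> letter list set" where "cl \<equiv> pres_class rels6"

lemma G6_group: "group G6" by (simp add: G6_def pg_group)
lemma G6_carrier: "carrier G6 = range cl" by (simp add: G6_def pg_carrier)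
lemma G6_mult: "cl u \<otimes>\<^bsub>G6\<^esub> cl v = cl (u @ v)" by (simp add: G6_def pg_mult)
lemma G6_one: "\<one>\<^bsub>G6\<^esub> = cl []" by (simp add: G6_def pg_one)
lemma G6_inv: "inv\<^bsub>G6\<^esub> (cl u) = cl (invw u)" by (simp add: G6_def pg_inv)
lemma cl_ev: "cl u = cl v \<longleftrightarrow> ev u = ev v" by (simp add: cl_eq pe_iff_ev)
lemma cl_in[simp]: "cl u \<in> carrier G6" by (simp add: G6_carrier)
lemma gen6_cl: "gen6 x = cl [(x, False)]" by (simp add: gen6_def)

lemma G6_natpow: "cl [l] [^]\<^bsub>G6\<^esub> (n::nat) = cl (replicate n l)"
proof (induction n)
  case 0 then show ?case by (simp add: G6_one)
next
  case (Suc n)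
  have "cl [l] [^]\<^bsub>G6\<^esub> Suc n = cl [l] [^]\<^bsub>G6\<^esub> n \<otimes>\<^bsub>G6\<^esub> cl [l]"
    using monoid.nat_pow_Suc[OF group.is_monoid[OF G6_group]] by simp
  moreover have "replicate (Suc n) l = replicate n l @ [l]" by (simp add: replicate_append_same)
  ultimately show ?case by (simp only: Suc G6_mult)
qed

definition wpow :: "gen \<Rightarrow> int \<Rightarrow> letter list" where
  "wpow x i = replicate (nat \<bar>i\<bar>) (x, i < 0)"

lemma invw_replicate: "invw (replicate n l) = replicate n (linv l)"
  by (simp add: invw_def)

lemma G6_intpow: "gen6 x [^]\<^bsub>G6\<^esub> (i::int) = cl (wpow x i)"
proof (cases "i < 0")
  case True
  have "gen6 x [^]\<^bsub>G6\<^esub> i = inv\<^bsub>G6\<^esub> (gen6 x [^]\<^bsub>G6\<^esub> nat (- i))"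
    using True unfolding int_pow_def2[of G6 "gen6 x" i] by simp
  also have "\<dots> = cl (invw (replicate (nat (- i)) (x, False)))"
    unfolding gen6_cl G6_natpow G6_inv ..
  also have "\<dots> = cl (wpow x i)"
    using True by (simp add: invw_replicate wpow_def linv_def)
  finally show ?thesis .
next
  case False
  have "gen6 x [^]\<^bsub>G6\<^esub> i = gen6 x [^]\<^bsub>G6\<^esub> nat i"
    using False unfolding int_pow_def2[of G6 "gen6 x" i] by simp
  also have "\<dots> = cl (replicate (nat i) (x, False))"
    unfolding gen6_cl G6_natpow ..
  also have "\<dots> = cl (wpow x i)"
    using False by (simp add: wpow_def)
  finally show ?thesis .
qed

lemma rep_wpow: "replicate n (x, e) = wpow x (if e then - int n else int n)"
  by (cases "n = 0") (auto simp: wpow_def)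

lemma wpow_inj: "wpow x i = wpow x j \<Longrightarrow> i = j"
proof -
  assume a: "wpow x i = wpow x j"
  then have l: "nat \<bar>i\<bar> = nat \<bar>j\<bar>" unfolding wpow_def by (metis length_replicate)
  show "i = j"
  proof (cases "i = 0")
    case True then show ?thesis using l by simp
  next
    case False
    then obtain k where "nat \<bar>i\<bar> = Suc k" by (cases "nat \<bar>i\<bar>") auto
    then have "(x, i < 0) = (x, j < 0)" using a l unfolding wpow_def by simp
    then show ?thesis using l by auto
  qed
qed

lemma cr_rep: "cr l (replicate n l) = l # replicate n l"
  by (cases n) (auto simp: cr_def)

lemma ev_rep_st: "\<not> abc l \<Longrightarrow> ev (replicate n l) = ([], replicate n l)"
  by (induction n) (auto simp: ev_Cons act_def cr_rep)

lemma ev_rep_abc: "abc l \<Longrightarrow> ev (replicate n l) = (replicate n l, [])"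
  by (induction n) (auto simp: ev_Cons act_def cr_rep)

lemma reduced_rep: "reduced (replicate n l)"
  by (induction n) (auto simp: reduced_Cons)

lemma reduced_rep_snoc: "fst y \<noteq> fst l \<Longrightarrow> reduced (replicate n l @ [y])"
proof (induction n)
  case 0 then show ?case by simp
next
  case (Suc n)
  have "hd (replicate n l @ [y]) \<noteq> linv l" using Suc.prems by (cases n) (auto simp: linv_def prod_eq_iff)
  then show ?case using Suc by (simp add: reduced_Cons)
qed

lemma reduced_Cons_rep: "fst y \<noteq> fst l \<Longrightarrow> reduced (y # replicate n l)"
  by (cases n) (auto simp: reduced_Cons reduced_rep linv_def prod_eq_iff)

lemma phi_nonA: "fst x \<noteq> ga \<Longrightarrow> phi l [x] = [x]"
  by (simp add: phi_def img_def cr_def)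

lemma phiw_nonA: "fst x \<noteq> ga \<Longrightarrow> phiw g [x] = [x]"
  by (induction g) (auto simp: phi_nonA)

lemma phiw_nil[simp]: "phiw g [] = []"
  by (induction g) auto

lemma concat_img_rep: "fst x \<noteq> ga \<Longrightarrow> concat (map (img l) (replicate n x)) = replicate n x"
  by (induction n) (auto simp: img_def)

lemma phiw_s: "phiw (replicate n (gs, e)) [(ga, False)] = (ga, False) # replicate n (gb, e)"
proof (induction n)
  case 0 then show ?case by simp
next
  case (Suc n)
  have "phiw (replicate (Suc n) (gs, e)) [(ga, False)] = phi (gs, e) ((ga, False) # replicate n (gb, e))"
    using Suc by simp
  also have "\<dots> = lmul ((ga, False) # (gb, e) # replicate n (gb, e)) []"
    by (simp add: phi_def concat_img_rep) (simp add: img_def)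
  also have "\<dots> = (ga, False) # replicate (Suc n) (gb, e)"
  proof -
    have rr: "reduced ((ga, False) # replicate (Suc n) (gb, e))" by (rule reduced_Cons_rep) simp
    show ?thesis using lmul_red[OF rr] by (simp del: lmul_Cons)
  qed
  finally show ?case .
qed

lemma rep_snoc2: "replicate (Suc n) x @ [y] = replicate n x @ [x, y]"
  by (induction n) auto

lemma phiw_t: "phiw (replicate n (gt, e)) [(ga, False)] = replicate n (gb, e) @ [(ga, False)]"
proof (induction n)
  case 0 then show ?case by simp
next
  case (Suc n)
  have r: "reduced (replicate n (gb, e) @ [(gb, e), (ga, False)])"
    using reduced_rep_snoc[of "(ga, False)" "(gb, e)" "Suc n"] by (simp only: rep_snoc2) simp
  have "phiw (replicate (Suc n) (gt, e)) [(ga, False)] = phi (gt, e) (replicate n (gb, e) @ [(ga, False)])"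
    using Suc by simp
  also have "\<dots> = lmul (replicate n (gb, e) @ [(gb, e), (ga, False)]) []"
    by (simp add: phi_def concat_img_rep img_def)
  also have "\<dots> = replicate n (gb, e) @ [(gb, e), (ga, False)]"
    by (rule lmul_red[OF r])
  also have "\<dots> = replicate (Suc n) (gb, e) @ [(ga, False)]"
    by (simp only: rep_snoc2)
  finally show ?case .
qed

lemma lmul_w_invw: "reduced (invw w) \<Longrightarrow> lmul w (invw w) = []"
  using lmul_inv2[of "[]" w] lmul_red[of "invw w"] by simp

lemma ev_conj: assumes "\<not> abc l"
  shows "ev (replicate n l @ [(ga, False)] @ invw (replicate n l)) = (phiw (replicate n l) [(ga, False)], [])"
proof -
  have nl: "\<not> abc (linv l)" using assms by simp
  have e2: "ev ((ga, False) # replicate n (linv l)) = ([(ga, False)], replicate n (linv l))"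
    by (simp add: ev_Cons ev_rep_st[OF nl] act_def abc_def cr_def)
  have l: "lmul (replicate n l) (replicate n (linv l)) = []"
    using lmul_w_invw[of "replicate n l"] by (simp add: invw_replicate reduced_rep)
  have "ev (replicate n l @ [(ga, False)] @ invw (replicate n l)) =
        mulM (ev (replicate n l)) (ev ((ga, False) # replicate n (linv l)))"
    by (simp add: ev_append[of "replicate n l"] invw_replicate)
  also have "\<dots> = (phiw (replicate n l) [(ga, False)], [])"
    by (simp add: e2 ev_rep_st[OF assms] mulM_def l)
  finally show ?thesis .
qed

lemma rot: "x # t = t @ [z] \<Longrightarrow> t = replicate (length t) x"
proof (induction t arbitrary: x)
  case Nil then show ?case by simp
next
  case (Cons y t)
  then have "x = y" "y # t = t @ [z]" by auto
  then show ?case using Cons.IH[of y] by simp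
qed

lemma hd_butlast': "butlast u \<noteq> [] \<Longrightarrow> hd (butlast u) = hd u" by (cases u) auto

lemma linv_swap: "(x = linv y) = (y = linv x)" by auto

lemma lmul_snoc: "reduced u \<Longrightarrow> lmul u [x] = (if u \<noteq> [] \<and> last u = linv x then butlast u else u @ [x])"
proof (induction u)
  case Nil then show ?case by simp
next
  case (Cons y u)
  have ru: "reduced u" using Cons.prems by (simp add: reduced_Cons)
  have hu: "u \<noteq> [] \<Longrightarrow> hd u \<noteq> linv y" using Cons.prems by (simp add: reduced_Cons)
  show ?case
  proof (cases "u = []")
    case True then show ?thesis by (auto simp: cr_def linv_swap)
  next
    case False
    show ?thesis
    proof (cases "last u = linv x")
      case True
      have "cr y (butlast u) = y # butlast u"
        using hu False by (cases "butlast u = []") (auto simp: cr_def hd_butlast')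
      then show ?thesis using Cons.IH[OF ru] False True by simp
    next
      case F2: False
      have "cr y (u @ [x]) = y # u @ [x]" using hu False by (auto simp: cr_def)
      then show ?thesis using Cons.IH[OF ru] False F2 by simp
    qed
  qed
qed

lemma comm_letter: assumes r: "reduced u" and eq: "lmul u [x] = cr x u"
  shows "\<exists>n e. u = replicate n (fst x, e)"
proof (cases "u \<noteq> [] \<and> hd u = linv x")
  case H: True
  then obtain t where u: "u = linv x # t" by (cases u) auto
  have c: "cr x u = t" by (simp add: cr_def u)
  show ?thesis
  proof (cases "last u = linv x")
    case True
    then have bl: "butlast u = t" using eq lmul_snoc[OF r, of x] c u by simp
    have "u = butlast u @ [last u]" using u by simp
    then have "linv x # t = t @ [linv x]" using bl True u by simp
    then have "t = replicate (length t) (linv x)" by (rule rot)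
    then have "u = replicate (Suc (length t)) (fst x, \<not> snd x)" using u by (simp add: linv_def)
    then show ?thesis by blast
  next
    case False
    then have "u @ [x] = t" using eq lmul_snoc[OF r, of x] c u by simp
    then have "length (u @ [x]) = length t" by simp
    then show ?thesis using u by simp
  qed
next
  case H: False
  then have c: "cr x u = x # u" by (auto simp: cr_def)
  show ?thesis
  proof (cases "u \<noteq> [] \<and> last u = linv x")
    case True
    then have "butlast u = x # u" using eq lmul_snoc[OF r, of x] c by simp
    then have "length (butlast u) = length (x # u)" by simp
    then show ?thesis by simp
  next
    case False
    then have "u @ [x] = x # u" using eq lmul_snoc[OF r, of x] c by (simp split: if_splits)
    then have "x # u = u @ [x]" by simp
    then have "u = replicate (length u) x" by (rule rot)
    then show ?thesis by (metis prod.collapse)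
  qed
qed

lemma cr_eq_Cons: assumes "reduced u" "cr x u = x # R" shows "u = R"
proof (cases "u \<noteq> [] \<and> hd u = linv x")
  case True
  then obtain t where u: "u = linv x # t" by (cases u) auto
  then have "t = x # R" using assms(2) by (simp add: cr_def)
  then show ?thesis using assms(1) u by (simp add: reduced_Cons)
next
  case False then show ?thesis using assms(2) by (auto simp: cr_def)
qed

lemma (in group) prod_inv_one: "a \<in> carrier G \<Longrightarrow> b \<in> carrier G \<Longrightarrow> (a \<otimes> inv b = \<one>) = (a = b)"
  by (metis inv_closed inv_inv inv_equality r_inv)

lemma (in group) gen_comm:
  assumes h: "h \<in> carrier G" and K: "K \<subseteq> carrier G" and c: "\<forall>k\<in>K. k \<otimes> h = h \<otimes> k"
    and x: "x \<in> generate G K"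
  shows "x \<otimes> h = h \<otimes> x"
  using x
proof (induction rule: generate.induct)
  case one then show ?case using h by simp
next
  case (incl k) then show ?case using c by simp
next
  case (inv k)
  have k: "k \<in> carrier G" using inv K by auto
  have kh: "k \<otimes> h = h \<otimes> k" using c inv by simp
  have "inv k \<otimes> h = inv k \<otimes> (h \<otimes> k) \<otimes> inv k" using k h by (simp add: m_assoc)
  also have "\<dots> = inv k \<otimes> (k \<otimes> h) \<otimes> inv k" by (simp add: kh)
  also have "\<dots> = h \<otimes> inv k" using k h by (simp add: m_assoc[symmetric])
  finally show ?case .
next
  case (eng a b)
  have ab: "a \<in> carrier G" "b \<in> carrier G" using eng generate_in_carrier[OF K] by auto
  have ah: "a \<otimes> h = h \<otimes> a" and bh: "b \<otimes> h = h \<otimes> b" using eng by auto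
  have "a \<otimes> b \<otimes> h = a \<otimes> (b \<otimes> h)" using ab h by (simp add: m_assoc)
  also have "\<dots> = a \<otimes> (h \<otimes> b)" by (simp only: bh)
  also have "\<dots> = a \<otimes> h \<otimes> b" using ab h by (simp add: m_assoc)
  also have "\<dots> = h \<otimes> a \<otimes> b" by (simp only: ah)
  also have "\<dots> = h \<otimes> (a \<otimes> b)" using ab h by (simp add: m_assoc)
  finally show ?case .
qed

lemma (in group) lcan: "x \<in> carrier G \<Longrightarrow> y \<in> carrier G \<Longrightarrow> z \<in> carrier G \<Longrightarrow> x \<otimes> y = x \<otimes> z \<Longrightarrow> y = z"
  by (metis inv_closed l_inv l_one m_assoc)
lemma (in group) rcan: "x \<in> carrier G \<Longrightarrow> y \<in> carrier G \<Longrightarrow> z \<in> carrier G \<Longrightarrow> y \<otimes> x = z \<otimes> x \<Longrightarrow> y = z"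
  by (metis inv_closed r_inv r_one m_assoc)

definition Ecomm :: "nat \<Rightarrow> letter list set \<Rightarrow> letter list set equation" where
  "Ecomm k g = [Inr (k, False), Inl g, Inr (k, True), Inl (inv\<^bsub>G6\<^esub> g)]"
definition Econj1 :: "nat \<Rightarrow> letter list set \<Rightarrow> nat \<Rightarrow> letter list set equation" where
  "Econj1 k a j = [Inr (k, False), Inl a, Inr (k, True), Inr (j, True), Inl (inv\<^bsub>G6\<^esub> a)]"
definition Econj2 :: "nat \<Rightarrow> letter list set \<Rightarrow> nat \<Rightarrow> letter list set equation" where
  "Econj2 k a j = [Inr (k, False), Inl a, Inr (k, True), Inl (inv\<^bsub>G6\<^esub> a), Inr (j, True)]"

lemma G6_inv_closed[simp]: "x \<in> carrier G6 \<Longrightarrow> inv\<^bsub>G6\<^esub> x \<in> carrier G6"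
  by (rule group.inv_closed[OF G6_group])
lemma G6_m_closed[simp]: "x \<in> carrier G6 \<Longrightarrow> y \<in> carrier G6 \<Longrightarrow> x \<otimes>\<^bsub>G6\<^esub> y \<in> carrier G6"
  by (rule monoid.m_closed[OF group.is_monoid[OF G6_group]])

lemma is_eq_Ecomm: "g \<in> carrier G6 \<Longrightarrow> is_equation G6 (Ecomm k g)"
  by (auto simp: is_equation_def Ecomm_def)
lemma is_eq_Econj1: "a \<in> carrier G6 \<Longrightarrow> is_equation G6 (Econj1 k a j)"
  by (auto simp: is_equation_def Econj1_def)
lemma is_eq_Econj2: "a \<in> carrier G6 \<Longrightarrow> is_equation G6 (Econj2 k a j)"
  by (auto simp: is_equation_def Econj2_def)

lemma eval_Ecomm: assumes "\<sigma> k \<in> carrier G6" "g \<in> carrier G6"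
  shows "(eq_eval G6 \<sigma> (Ecomm k g) = \<one>\<^bsub>G6\<^esub>) = (\<sigma> k \<otimes>\<^bsub>G6\<^esub> g = g \<otimes>\<^bsub>G6\<^esub> \<sigma> k)"
proof -
  interpret group G6 by (rule G6_group)
  have "eq_eval G6 \<sigma> (Ecomm k g) = (\<sigma> k \<otimes>\<^bsub>G6\<^esub> g) \<otimes>\<^bsub>G6\<^esub> inv\<^bsub>G6\<^esub> (g \<otimes>\<^bsub>G6\<^esub> \<sigma> k)"
    using assms by (simp add: Ecomm_def m_assoc inv_mult_group)
  then show ?thesis using prod_inv_one assms by simp
qed

lemma eval_Econj1: assumes "\<sigma> k \<in> carrier G6" "\<sigma> j \<in> carrier G6" "a \<in> carrier G6"
  shows "(eq_eval G6 \<sigma> (Econj1 k a j) = \<one>\<^bsub>G6\<^esub>) =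
    (\<sigma> k \<otimes>\<^bsub>G6\<^esub> a \<otimes>\<^bsub>G6\<^esub> inv\<^bsub>G6\<^esub> (\<sigma> k) = a \<otimes>\<^bsub>G6\<^esub> \<sigma> j)"
proof -
  interpret group G6 by (rule G6_group)
  have "eq_eval G6 \<sigma> (Econj1 k a j) = (\<sigma> k \<otimes>\<^bsub>G6\<^esub> a \<otimes>\<^bsub>G6\<^esub> inv\<^bsub>G6\<^esub> (\<sigma> k)) \<otimes>\<^bsub>G6\<^esub> inv\<^bsub>G6\<^esub> (a \<otimes>\<^bsub>G6\<^esub> \<sigma> j)"
    using assms by (simp add: Econj1_def m_assoc inv_mult_group)
  then show ?thesis using prod_inv_one assms by simp
qed

lemma eval_Econj2: assumes "\<sigma> k \<in> carrier G6" "\<sigma> j \<in> carrier G6" "a \<in> carrier G6"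
  shows "(eq_eval G6 \<sigma> (Econj2 k a j) = \<one>\<^bsub>G6\<^esub>) =
    (\<sigma> k \<otimes>\<^bsub>G6\<^esub> a \<otimes>\<^bsub>G6\<^esub> inv\<^bsub>G6\<^esub> (\<sigma> k) = \<sigma> j \<otimes>\<^bsub>G6\<^esub> a)"
proof -
  interpret group G6 by (rule G6_group)
  have "eq_eval G6 \<sigma> (Econj2 k a j) = (\<sigma> k \<otimes>\<^bsub>G6\<^esub> a \<otimes>\<^bsub>G6\<^esub> inv\<^bsub>G6\<^esub> (\<sigma> k)) \<otimes>\<^bsub>G6\<^esub> inv\<^bsub>G6\<^esub> (\<sigma> j \<otimes>\<^bsub>G6\<^esub> a)"
    using assms by (simp add: Econj2_def m_assoc inv_mult_group)
  then show ?thesis using prod_inv_one assms by simp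
qed

section \<open>Centralizer computations\<close>

lemma gen6_in[simp]: "gen6 x \<in> carrier G6" by (simp add: gen6_cl)

lemma comm_ev: "(cl w \<otimes>\<^bsub>G6\<^esub> gen6 y = gen6 y \<otimes>\<^bsub>G6\<^esub> cl w) =
    (mulM (ev w) (ev [(y, False)]) = act (y, False) (ev w))"
  by (simp add: gen6_cl G6_mult cl_ev ev_append ev_Cons)

lemma ev_single_abc: "abc (y, False) \<Longrightarrow> ev [(y, False)] = ([(y, False)], [])"
  by (simp add: ev_Cons act_def cr_def)
lemma ev_single_st: "\<not> abc (y, False) \<Longrightarrow> ev [(y, False)] = ([], [(y, False)])"
  by (simp add: ev_Cons act_def cr_def)

lemma K_abc: assumes "valid (u, g)" "fst x \<noteq> ga" "abc x" "mulM (u, g) ([x], []) = act x (u, g)"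
  shows "\<exists>n e. u = replicate n (fst x, e)"
proof -
  have r: "reduced u" "reduced g" using assms(1) by (auto simp: valid_def)
  have "mulM (u, g) ([x], []) = (lmul u [x], g)"
    by (simp add: mulM_def phiw_nonA[OF assms(2)] lmul_red[OF r(2)])
  then have "lmul u [x] = cr x u" using assms(3,4) by (simp add: act_def)
  then show ?thesis by (rule comm_letter[OF r(1)])
qed

lemma K_st: assumes "valid ([], g)" "\<not> abc x" "mulM ([], g) ([], [x]) = act x ([], g)"
  shows "\<exists>n e. g = replicate n (fst x, e)"
proof -
  have r: "reduced g" using assms(1) by (auto simp: valid_def)
  have "lmul g [x] = cr x g" using assms(2,3) by (simp add: act_def mulM_def)
  then show ?thesis by (rule comm_letter[OF r])
qed

lemma center_bc: assumes "x \<in> carrier G6" "x \<otimes>\<^bsub>G6\<^esub> gen6 gb = gen6 gb \<otimes>\<^bsub>G6\<^esub> x"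
    "x \<otimes>\<^bsub>G6\<^esub> gen6 gc = gen6 gc \<otimes>\<^bsub>G6\<^esub> x"
  shows "\<exists>w g. x = cl w \<and> ev w = ([], g)"
proof -
  obtain w where x: "x = cl w" using assms(1) by (auto simp: G6_carrier)
  obtain u g where e: "ev w = (u, g)" by (cases "ev w")
  have v: "valid (u, g)" using valid_ev[of w] by (simp add: e)
  have ab: "abc (gb, False)" "abc (gc, False)" by (auto simp: abc_def)
  have "mulM (u, g) ([(gb, False)], []) = act (gb, False) (u, g)"
    using assms(2) by (simp add: x comm_ev e ev_single_abc[OF ab(1)])
  then obtain n e1 where u1: "u = replicate n (gb, e1)" using K_abc[OF v _ ab(1)] by auto
  have "mulM (u, g) ([(gc, False)], []) = act (gc, False) (u, g)"
    using assms(3) by (simp add: x comm_ev e ev_single_abc[OF ab(2)])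
  then obtain m e2 where u2: "u = replicate m (gc, e2)" using K_abc[OF v _ ab(2)] by auto
  have "u = []" using u1 u2 by (cases n; cases m) auto
  then show ?thesis using x e by blast
qed

lemma ev_st_word: "reduced g \<Longrightarrow> \<forall>x\<in>set g. \<not> abc x \<Longrightarrow> ev g = ([], g)"
proof (induction g)
  case Nil then show ?case by simp
next
  case (Cons l g)
  have "reduced g" using Cons.prems by (simp add: reduced_Cons)
  then have "ev g = ([], g)" using Cons by simp
  then show ?case using Cons.prems by (simp add: ev_Cons act_def cr_noncancel)
qed

lemma gen_st_word: "\<forall>x\<in>set g. \<not> abc x \<Longrightarrow> cl g \<in> generate G6 {gen6 gs, gen6 gt}"
proof (induction g)
  case Nil then show ?case using generate.one[of G6] by (simp add: G6_one)
next
  case (Cons l g)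
  obtain y e where l: "l = (y, e)" and y: "y = gs \<or> y = gt"
    using Cons.prems by (cases l; cases "fst l") (auto simp: abc_def)
  have "cl [l] \<in> generate G6 {gen6 gs, gen6 gt}"
  proof (cases e)
    case False then show ?thesis using y l by (auto simp: gen6_cl intro: generate.incl)
  next
    case True
    have "cl [l] = inv\<^bsub>G6\<^esub> (gen6 y)" by (simp add: gen6_cl G6_inv l True linv_def)
    then show ?thesis using y by (auto intro: generate.inv)
  qed
  then have "cl [l] \<otimes>\<^bsub>G6\<^esub> cl g \<in> generate G6 {gen6 gs, gen6 gt}"
    using Cons by (auto intro: generate.eng)
  then show ?case by (simp add: G6_mult)
qed

lemma part5_sub: assumes "x \<in> carrier G6" "x \<otimes>\<^bsub>G6\<^esub> gen6 gb = gen6 gb \<otimes>\<^bsub>G6\<^esub> x"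
    "x \<otimes>\<^bsub>G6\<^esub> gen6 gc = gen6 gc \<otimes>\<^bsub>G6\<^esub> x"
  shows "x \<in> generate G6 {gen6 gs, gen6 gt}"
proof -
  obtain w g where x: "x = cl w" and e: "ev w = ([], g)" using center_bc[OF assms] by blast
  have v: "reduced g" "\<forall>x\<in>set g. \<not> abc x" using valid_ev[of w] by (auto simp: e valid_def)
  have "x = cl g" using ev_st_word[OF v] by (simp add: x cl_ev e)
  then show ?thesis using gen_st_word[OF v(2)] by simp
qed

lemma cent_st: assumes "y = gs \<or> y = gt" "x \<in> carrier G6"
    "x \<otimes>\<^bsub>G6\<^esub> gen6 gb = gen6 gb \<otimes>\<^bsub>G6\<^esub> x"
    "x \<otimes>\<^bsub>G6\<^esub> gen6 gc = gen6 gc \<otimes>\<^bsub>G6\<^esub> x"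
    "x \<otimes>\<^bsub>G6\<^esub> gen6 y = gen6 y \<otimes>\<^bsub>G6\<^esub> x"
  shows "\<exists>i. x = gen6 y [^]\<^bsub>G6\<^esub> (i::int)"
proof -
  obtain w g where x: "x = cl w" and e: "ev w = ([], g)" using center_bc[OF assms(2-4)] by blast
  have v: "valid ([], g)" using valid_ev[of w] by (simp add: e)
  have st: "\<not> abc (y, False)" using assms(1) by (auto simp: abc_def)
  have "mulM ([], g) ([], [(y, False)]) = act (y, False) ([], g)"
    using assms(5) by (simp add: x comm_ev e ev_single_st[OF st])
  then obtain n e1 where g: "g = replicate n (y, e1)" using K_st[OF v st] by auto
  define i where "i = (if e1 then - int n else int n)"
  have g': "g = wpow y i" using g rep_wpow i_def by simp
  have st2: "\<not> abc (y, i < 0)" using assms(1) by (auto simp: abc_def)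
  have "ev (wpow y i) = ([], wpow y i)" unfolding wpow_def by (rule ev_rep_st[OF st2])
  then have "x = cl (wpow y i)" using e g' by (simp add: x cl_ev)
  then show ?thesis by (auto simp: G6_intpow)
qed

lemma gens_comm:
  "gen6 gs \<otimes>\<^bsub>G6\<^esub> gen6 gb = gen6 gb \<otimes>\<^bsub>G6\<^esub> gen6 gs"
  "gen6 gs \<otimes>\<^bsub>G6\<^esub> gen6 gc = gen6 gc \<otimes>\<^bsub>G6\<^esub> gen6 gs"
  "gen6 gt \<otimes>\<^bsub>G6\<^esub> gen6 gb = gen6 gb \<otimes>\<^bsub>G6\<^esub> gen6 gt"
  "gen6 gt \<otimes>\<^bsub>G6\<^esub> gen6 gc = gen6 gc \<otimes>\<^bsub>G6\<^esub> gen6 gt"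
  by (simp_all add: gen6_cl G6_mult cl_ev ev_Cons act_def abc_def cr_def phi_def img_def linv_def)

section \<open>Conjugation computations\<close>

lemma conj_s: "gen6 gs [^]\<^bsub>G6\<^esub> (i::int) \<otimes>\<^bsub>G6\<^esub> gen6 ga \<otimes>\<^bsub>G6\<^esub> inv\<^bsub>G6\<^esub> (gen6 gs [^]\<^bsub>G6\<^esub> i)
   = gen6 ga \<otimes>\<^bsub>G6\<^esub> gen6 gb [^]\<^bsub>G6\<^esub> i"
proof -
  have st: "\<not> abc (gs, i < 0)" by (simp add: abc_def)
  have "ev (wpow gs i @ [(ga, False)] @ invw (wpow gs i)) = ((ga, False) # wpow gb i, [])"
    unfolding wpow_def ev_conj[OF st] phiw_s ..
  moreover have "ev ((ga, False) # wpow gb i) = ((ga, False) # wpow gb i, [])"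
    unfolding wpow_def ev_Cons ev_rep_abc[of "(gb, i < 0)", simplified abc_def, simplified]
    by (cases "nat \<bar>i\<bar>") (simp_all add: act_def abc_def cr_def linv_def)
  ultimately show ?thesis by (simp only: G6_intpow) (simp add: gen6_cl G6_inv G6_mult cl_ev)
qed

lemma conj_t: "gen6 gt [^]\<^bsub>G6\<^esub> (i::int) \<otimes>\<^bsub>G6\<^esub> gen6 ga \<otimes>\<^bsub>G6\<^esub> inv\<^bsub>G6\<^esub> (gen6 gt [^]\<^bsub>G6\<^esub> i)
   = gen6 gb [^]\<^bsub>G6\<^esub> i \<otimes>\<^bsub>G6\<^esub> gen6 ga"
proof -
  have st: "\<not> abc (gt, i < 0)" by (simp add: abc_def)
  have "ev (wpow gt i @ [(ga, False)] @ invw (wpow gt i)) = (wpow gb i @ [(ga, False)], [])"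
    unfolding wpow_def ev_conj[OF st] phiw_t ..
  moreover have "ev (wpow gb i @ [(ga, False)]) = (wpow gb i @ [(ga, False)], [])"
  proof -
    have r: "reduced (wpow gb i @ [(ga, False)])" unfolding wpow_def by (rule reduced_rep_snoc) simp
    have "ev (wpow gb i) = (wpow gb i, [])" unfolding wpow_def by (rule ev_rep_abc) (simp add: abc_def)
    then show ?thesis
      by (simp add: ev_append ev_single_abc abc_def mulM_def lmul_red_app[OF r])
  qed
  ultimately show ?thesis by (simp only: G6_intpow) (simp add: gen6_cl G6_inv G6_mult cl_ev)
qed

lemma bpow_inj: "gen6 gb [^]\<^bsub>G6\<^esub> (i::int) = gen6 gb [^]\<^bsub>G6\<^esub> j \<Longrightarrow> i = j"
proof -
  assume a: "gen6 gb [^]\<^bsub>G6\<^esub> (i::int) = gen6 gb [^]\<^bsub>G6\<^esub> j"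
  have "ev (wpow gb k) = (wpow gb k, [])" for k
    unfolding wpow_def by (rule ev_rep_abc) (simp add: abc_def)
  then have "wpow gb i = wpow gb j" using a by (simp add: G6_intpow cl_ev)
  then show ?thesis by (rule wpow_inj)
qed

lemma gen_pow_in: "gen6 y [^]\<^bsub>G6\<^esub> (i::int) \<in> generate G6 {gen6 y}"
  using group.generate_pow[OF G6_group gen6_in[of y]] by auto

lemma pow_carrier[simp]: "gen6 y [^]\<^bsub>G6\<^esub> (i::int) \<in> carrier G6"
  by (simp add: G6_intpow)

lemma pow_comm:
  assumes "y = gs \<or> y = gt" "h = gen6 gb \<or> h = gen6 gc \<or> h = gen6 y"
  shows "gen6 y [^]\<^bsub>G6\<^esub> (i::int) \<otimes>\<^bsub>G6\<^esub> h = h \<otimes>\<^bsub>G6\<^esub> gen6 y [^]\<^bsub>G6\<^esub> i"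
proof (rule group.gen_comm[OF G6_group _ _ _ gen_pow_in])
  show "h \<in> carrier G6" using assms(2) by auto
  show "{gen6 y} \<subseteq> carrier G6" by simp
  show "\<forall>k\<in>{gen6 y}. k \<otimes>\<^bsub>G6\<^esub> h = h \<otimes>\<^bsub>G6\<^esub> k" using assms gens_comm by auto
qed

lemma part5: "eq_definable G6 1 {[g] | g. g \<in> generate G6 {gen6 gs, gen6 gt}}"
proof -
  let ?E = "{Ecomm 0 (gen6 gb), Ecomm 0 (gen6 gc)}"
  have sol: "solves G6 ?E \<sigma> \<longleftrightarrow> (\<forall>x. \<sigma> x \<in> carrier G6) \<and>
      \<sigma> 0 \<otimes>\<^bsub>G6\<^esub> gen6 gb = gen6 gb \<otimes>\<^bsub>G6\<^esub> \<sigma> 0 \<and> \<sigma> 0 \<otimes>\<^bsub>G6\<^esub> gen6 gc = gen6 gc \<otimes>\<^bsub>G6\<^esub> \<sigma> 0" for \<sigma>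
  proof (cases "\<forall>x. \<sigma> x \<in> carrier G6")
    case True
    then have c0: "\<sigma> 0 \<in> carrier G6" by blast
    show ?thesis unfolding solves_def using True
      by (simp add: eval_Ecomm[of \<sigma> 0, OF c0 gen6_in])
  qed (auto simp: solves_def)
  have Kc: "{gen6 gs, gen6 gt} \<subseteq> carrier G6" by simp
  have "{[g] | g. g \<in> generate G6 {gen6 gs, gen6 gt}} = {map \<sigma> [0] | \<sigma>. solves G6 ?E \<sigma>}"
  proof (rule Set.set_eqI, rule iffI)
    fix l assume "l \<in> {[g] | g. g \<in> generate G6 {gen6 gs, gen6 gt}}"
    then obtain g where l: "l = [g]" and g: "g \<in> generate G6 {gen6 gs, gen6 gt}" by blast
    have gc: "g \<in> carrier G6" using group.generate_in_carrier[OF G6_group Kc g] .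
    have "g \<otimes>\<^bsub>G6\<^esub> gen6 gb = gen6 gb \<otimes>\<^bsub>G6\<^esub> g"
      by (rule group.gen_comm[OF G6_group _ Kc _ g]) (auto simp: gens_comm)
    moreover have "g \<otimes>\<^bsub>G6\<^esub> gen6 gc = gen6 gc \<otimes>\<^bsub>G6\<^esub> g"
      by (rule group.gen_comm[OF G6_group _ Kc _ g]) (auto simp: gens_comm)
    ultimately have "solves G6 ?E (\<lambda>_. g)" using sol gc by simp
    then show "l \<in> {map \<sigma> [0] | \<sigma>. solves G6 ?E \<sigma>}" using l by (auto intro!: exI[of _ "\<lambda>_. g"])
  next
    fix l assume "l \<in> {map \<sigma> [0] | \<sigma>. solves G6 ?E \<sigma>}"
    then obtain \<sigma> where l: "l = [\<sigma> 0]" and s: "solves G6 ?E \<sigma>" by auto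
    have "\<sigma> 0 \<in> generate G6 {gen6 gs, gen6 gt}" using s sol part5_sub by blast
    then show "l \<in> {[g] | g. g \<in> generate G6 {gen6 gs, gen6 gt}}" using l by auto
  qed
  then show ?thesis unfolding eq_definable_def
    by (intro exI[of _ ?E] exI[of _ "[0::nat]"]) (auto simp: is_eq_Ecomm)
qed

lemma part23: assumes y: "y = gs \<or> y = gt"
  shows "eq_definable G6 1 {[g] | g. g \<in> generate G6 {gen6 y}}"
proof -
  let ?E = "{Ecomm 0 (gen6 gb), Ecomm 0 (gen6 gc), Ecomm 0 (gen6 y)}"
  have sol: "solves G6 ?E \<sigma> \<longleftrightarrow> (\<forall>x. \<sigma> x \<in> carrier G6) \<and>
      \<sigma> 0 \<otimes>\<^bsub>G6\<^esub> gen6 gb = gen6 gb \<otimes>\<^bsub>G6\<^esub> \<sigma> 0 \<and> \<sigma> 0 \<otimes>\<^bsub>G6\<^esub> gen6 gc = gen6 gc \<otimes>\<^bsub>G6\<^esub> \<sigma> 0 \<and>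
      \<sigma> 0 \<otimes>\<^bsub>G6\<^esub> gen6 y = gen6 y \<otimes>\<^bsub>G6\<^esub> \<sigma> 0" for \<sigma>
  proof (cases "\<forall>x. \<sigma> x \<in> carrier G6")
    case True
    then have c0: "\<sigma> 0 \<in> carrier G6" by blast
    show ?thesis unfolding solves_def using True
      by (simp add: eval_Ecomm[of \<sigma> 0, OF c0 gen6_in])
  qed (auto simp: solves_def)
  have gp: "generate G6 {gen6 y} = {gen6 y [^]\<^bsub>G6\<^esub> (k::int) | k. k \<in> UNIV}"
    by (rule group.generate_pow[OF G6_group gen6_in])
  have "{[g] | g. g \<in> generate G6 {gen6 y}} = {map \<sigma> [0] | \<sigma>. solves G6 ?E \<sigma>}"
  proof (rule Set.set_eqI, rule iffI)
    fix l assume "l \<in> {[g] | g. g \<in> generate G6 {gen6 y}}"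
    then obtain i where l: "l = [gen6 y [^]\<^bsub>G6\<^esub> (i::int)]" using gp by auto
    have "solves G6 ?E (\<lambda>_. gen6 y [^]\<^bsub>G6\<^esub> i)" using sol pow_comm[OF y] by simp
    then show "l \<in> {map \<sigma> [0] | \<sigma>. solves G6 ?E \<sigma>}" using l
      by (auto intro!: exI[of _ "\<lambda>_. gen6 y [^]\<^bsub>G6\<^esub> i"])
  next
    fix l assume "l \<in> {map \<sigma> [0] | \<sigma>. solves G6 ?E \<sigma>}"
    then obtain \<sigma> where l: "l = [\<sigma> 0]" and s: "solves G6 ?E \<sigma>" by auto
    then obtain i where "\<sigma> 0 = gen6 y [^]\<^bsub>G6\<^esub> (i::int)" using sol cent_st[OF y] by meson
    then show "l \<in> {[g] | g. g \<in> generate G6 {gen6 y}}" using l gen_pow_in by auto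
  qed
  then show ?thesis unfolding eq_definable_def
    by (intro exI[of _ ?E] exI[of _ "[0::nat]"]) (auto simp: is_eq_Ecomm)
qed

lemma part1: "eq_definable G6 1 {[g] | g. g \<in> generate G6 {gen6 gb}}"
proof -
  let ?E = "{Ecomm 1 (gen6 gb), Ecomm 1 (gen6 gc), Ecomm 1 (gen6 gs), Econj1 1 (gen6 ga) 0}"
  have sol: "solves G6 ?E \<sigma> \<longleftrightarrow> (\<forall>x. \<sigma> x \<in> carrier G6) \<and>
      \<sigma> 1 \<otimes>\<^bsub>G6\<^esub> gen6 gb = gen6 gb \<otimes>\<^bsub>G6\<^esub> \<sigma> 1 \<and> \<sigma> 1 \<otimes>\<^bsub>G6\<^esub> gen6 gc = gen6 gc \<otimes>\<^bsub>G6\<^esub> \<sigma> 1 \<and>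
      \<sigma> 1 \<otimes>\<^bsub>G6\<^esub> gen6 gs = gen6 gs \<otimes>\<^bsub>G6\<^esub> \<sigma> 1 \<and>
      \<sigma> 1 \<otimes>\<^bsub>G6\<^esub> gen6 ga \<otimes>\<^bsub>G6\<^esub> inv\<^bsub>G6\<^esub> (\<sigma> 1) = gen6 ga \<otimes>\<^bsub>G6\<^esub> \<sigma> 0" for \<sigma>
  proof (cases "\<forall>x. \<sigma> x \<in> carrier G6")
    case True
    then have c0: "\<sigma> 0 \<in> carrier G6" and c1: "\<sigma> (Suc 0) \<in> carrier G6" by blast+
    show ?thesis unfolding solves_def using True
      by (simp add: eval_Ecomm[of \<sigma> "Suc 0", OF c1 gen6_in] eval_Econj1[of \<sigma> "Suc 0" 0, OF c1 c0 gen6_in])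
  qed (auto simp: solves_def)
  have gp: "generate G6 {gen6 gb} = {gen6 gb [^]\<^bsub>G6\<^esub> (k::int) | k. k \<in> UNIV}"
    by (rule group.generate_pow[OF G6_group gen6_in])
  have "{[g] | g. g \<in> generate G6 {gen6 gb}} = {map \<sigma> [0] | \<sigma>. solves G6 ?E \<sigma>}"
  proof (rule Set.set_eqI, rule iffI)
    fix l assume "l \<in> {[g] | g. g \<in> generate G6 {gen6 gb}}"
    then obtain i where l: "l = [gen6 gb [^]\<^bsub>G6\<^esub> (i::int)]" using gp by auto
    define \<sigma> where "\<sigma> = (\<lambda>k::nat. if k = 0 then gen6 gb [^]\<^bsub>G6\<^esub> i else gen6 gs [^]\<^bsub>G6\<^esub> i)"
    have "solves G6 ?E \<sigma>" using sol pow_comm[of gs] conj_s[of i] by (simp add: \<sigma>_def)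
    then show "l \<in> {map \<sigma> [0] | \<sigma>. solves G6 ?E \<sigma>}" using l
      by (auto intro!: exI[of _ \<sigma>] simp: \<sigma>_def)
  next
    fix l assume "l \<in> {map \<sigma> [0] | \<sigma>. solves G6 ?E \<sigma>}"
    then obtain \<sigma> where l: "l = [\<sigma> 0]" and s: "solves G6 ?E \<sigma>" by auto
    have c: "\<sigma> 0 \<in> carrier G6" "\<sigma> 1 \<in> carrier G6" using s sol by auto
    obtain i where i: "\<sigma> 1 = gen6 gs [^]\<^bsub>G6\<^esub> (i::int)" using s sol cent_st[of gs] by meson
    have "gen6 ga \<otimes>\<^bsub>G6\<^esub> \<sigma> 0 = gen6 ga \<otimes>\<^bsub>G6\<^esub> gen6 gb [^]\<^bsub>G6\<^esub> i"
      using s sol conj_s[of i] i by simp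
    then have "\<sigma> 0 = gen6 gb [^]\<^bsub>G6\<^esub> i" using group.lcan[OF G6_group gen6_in c(1) pow_carrier] by simp
    then show "l \<in> {[g] | g. g \<in> generate G6 {gen6 gb}}" using l gen_pow_in by auto
  qed
  then show ?thesis unfolding eq_definable_def
    by (intro exI[of _ ?E] exI[of _ "[0::nat]"]) (auto simp: is_eq_Ecomm is_eq_Econj1)
qed

lemma part4: "eq_definable G6 2 {[gen6 gs [^]\<^bsub>G6\<^esub> (i::int), gen6 gt [^]\<^bsub>G6\<^esub> i] | i. True}"
proof -
  let ?E = "{Ecomm 0 (gen6 gb), Ecomm 0 (gen6 gc), Ecomm 0 (gen6 gs),
             Ecomm 1 (gen6 gb), Ecomm 1 (gen6 gc), Ecomm 1 (gen6 gt),
             Econj1 0 (gen6 ga) 2, Econj2 1 (gen6 ga) 2}"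
  have sol: "solves G6 ?E \<sigma> \<longleftrightarrow> (\<forall>x. \<sigma> x \<in> carrier G6) \<and>
      \<sigma> 0 \<otimes>\<^bsub>G6\<^esub> gen6 gb = gen6 gb \<otimes>\<^bsub>G6\<^esub> \<sigma> 0 \<and> \<sigma> 0 \<otimes>\<^bsub>G6\<^esub> gen6 gc = gen6 gc \<otimes>\<^bsub>G6\<^esub> \<sigma> 0 \<and>
      \<sigma> 0 \<otimes>\<^bsub>G6\<^esub> gen6 gs = gen6 gs \<otimes>\<^bsub>G6\<^esub> \<sigma> 0 \<and>
      \<sigma> 1 \<otimes>\<^bsub>G6\<^esub> gen6 gb = gen6 gb \<otimes>\<^bsub>G6\<^esub> \<sigma> 1 \<and> \<sigma> 1 \<otimes>\<^bsub>G6\<^esub> gen6 gc = gen6 gc \<otimes>\<^bsub>G6\<^esub> \<sigma> 1 \<and>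
      \<sigma> 1 \<otimes>\<^bsub>G6\<^esub> gen6 gt = gen6 gt \<otimes>\<^bsub>G6\<^esub> \<sigma> 1 \<and>
      \<sigma> 0 \<otimes>\<^bsub>G6\<^esub> gen6 ga \<otimes>\<^bsub>G6\<^esub> inv\<^bsub>G6\<^esub> (\<sigma> 0) = gen6 ga \<otimes>\<^bsub>G6\<^esub> \<sigma> 2 \<and>
      \<sigma> 1 \<otimes>\<^bsub>G6\<^esub> gen6 ga \<otimes>\<^bsub>G6\<^esub> inv\<^bsub>G6\<^esub> (\<sigma> 1) = \<sigma> 2 \<otimes>\<^bsub>G6\<^esub> gen6 ga" for \<sigma>
  proof (cases "\<forall>x. \<sigma> x \<in> carrier G6")
    case True
    then have c0: "\<sigma> 0 \<in> carrier G6" and c1: "\<sigma> (Suc 0) \<in> carrier G6" and c2: "\<sigma> 2 \<in> carrier G6" by blast+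
    show ?thesis unfolding solves_def using True
      by (simp add: eval_Ecomm[of \<sigma> 0, OF c0 gen6_in] eval_Ecomm[of \<sigma> "Suc 0", OF c1 gen6_in]
          eval_Econj1[of \<sigma> 0 2, OF c0 c2 gen6_in] eval_Econj2[of \<sigma> "Suc 0" 2, OF c1 c2 gen6_in] conj_ac)
  qed (auto simp: solves_def)
  have "{[gen6 gs [^]\<^bsub>G6\<^esub> (i::int), gen6 gt [^]\<^bsub>G6\<^esub> i] | i. True} = {map \<sigma> [0, 1] | \<sigma>. solves G6 ?E \<sigma>}"
  proof (rule Set.set_eqI, rule iffI)
    fix l assume "l \<in> {[gen6 gs [^]\<^bsub>G6\<^esub> (i::int), gen6 gt [^]\<^bsub>G6\<^esub> i] | i. True}"
    then obtain i where l: "l = [gen6 gs [^]\<^bsub>G6\<^esub> (i::int), gen6 gt [^]\<^bsub>G6\<^esub> i]" by auto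
    define \<sigma> where "\<sigma> = (\<lambda>k::nat. if k = 0 then gen6 gs [^]\<^bsub>G6\<^esub> i else
       if k = 1 then gen6 gt [^]\<^bsub>G6\<^esub> i else gen6 gb [^]\<^bsub>G6\<^esub> i)"
    have "solves G6 ?E \<sigma>" using sol pow_comm[of gs] pow_comm[of gt] conj_s[of i] conj_t[of i]
      by (simp add: \<sigma>_def)
    then show "l \<in> {map \<sigma> [0, 1] | \<sigma>. solves G6 ?E \<sigma>}" using l
      by (auto intro!: exI[of _ \<sigma>] simp: \<sigma>_def)
  next
    fix l assume "l \<in> {map \<sigma> [0, 1] | \<sigma>. solves G6 ?E \<sigma>}"
    then obtain \<sigma> where l: "l = [\<sigma> 0, \<sigma> 1]" and s: "solves G6 ?E \<sigma>" by auto
    have c: "\<sigma> 2 \<in> carrier G6" using s sol by auto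
    obtain i where i: "\<sigma> 0 = gen6 gs [^]\<^bsub>G6\<^esub> (i::int)" using s sol cent_st[of gs] by meson
    obtain j where j: "\<sigma> 1 = gen6 gt [^]\<^bsub>G6\<^esub> (j::int)" using s sol cent_st[of gt] by meson
    have "gen6 ga \<otimes>\<^bsub>G6\<^esub> \<sigma> 2 = gen6 ga \<otimes>\<^bsub>G6\<^esub> gen6 gb [^]\<^bsub>G6\<^esub> i"
      using s sol conj_s[of i] i by simp
    then have z: "\<sigma> 2 = gen6 gb [^]\<^bsub>G6\<^esub> i" using group.lcan[OF G6_group gen6_in c pow_carrier] by simp
    have "gen6 gb [^]\<^bsub>G6\<^esub> i \<otimes>\<^bsub>G6\<^esub> gen6 ga = gen6 gb [^]\<^bsub>G6\<^esub> j \<otimes>\<^bsub>G6\<^esub> gen6 ga"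
      using s sol conj_t[of j] j z by simp
    then have "gen6 gb [^]\<^bsub>G6\<^esub> i = gen6 gb [^]\<^bsub>G6\<^esub> j" using group.rcan[OF G6_group gen6_in pow_carrier pow_carrier] by simp
    then have "i = j" by (rule bpow_inj)
    then show "l \<in> {[gen6 gs [^]\<^bsub>G6\<^esub> (i::int), gen6 gt [^]\<^bsub>G6\<^esub> i] | i. True}" using l i j by auto
  qed
  then show ?thesis unfolding eq_definable_def
    by (intro exI[of _ ?E] exI[of _ "[0::nat, 1]"]) (auto simp: is_eq_Ecomm is_eq_Econj1 is_eq_Econj2)
qed

theorem lemma6p4:
  shows "eq_definable G6 1 {[g] | g. g \<in> generate G6 {gen6 gb}} \<and>
         eq_definable G6 1 {[g] | g. g \<in> generate G6 {gen6 gs}} \<and>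
         eq_definable G6 1 {[g] | g. g \<in> generate G6 {gen6 gt}} \<and>
         eq_definable G6 2 {[gen6 gs [^]\<^bsub>G6\<^esub> (i::int), gen6 gt [^]\<^bsub>G6\<^esub> i] | i. True} \<and>
         eq_definable G6 1 {[g] | g. g \<in> generate G6 {gen6 gs, gen6 gt}}"
  using part1 part23[of gs] part23[of gt] part4 part5 by simp

end
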